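(* Let $p>2$ be prime. For $t\in\mathbb{Z}/p\mathbb{Z}$ put $a_t(p)=-\sum_{x\bmod p}\left(\frac{x^3-t^2x+t^2}{p}\right)$. Then $\sum_{t\bmod p} a_t(p) = -2p$.
   Context: $\left(\frac{\cdot}{p}\right)$ denotes the Legendre symbol (equal to $0$ at multiples of $p$). *)

theory Defs
  imports "HOL-Number_Theory.Number_Theory"
begin

definition a_coeff :: "int \<Rightarrow> int \<Rightarrow> int" where
  "a_coeff p t = - (\<Sum>x\<in>{0..p-1}. Legendre (x^3 - t^2 * x + t^2) p)"

end

theory Submission imports Defs begin

lemma L_mod: "Legendre (a mod p) p = Legendre a p"
  unfolding Legendre_def QuadRes_def cong_def by simp

lemma L_cong: "[a = b] (mod p) \<Longrightarrow> Legendre a p = Legendre b p"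
  by (metis L_mod cong_def)

lemma L_range: "Legendre a p \<in> {-1,0,1}"
  unfolding Legendre_def by auto

lemma L_one: "p > 1 \<Longrightarrow> Legendre 1 p = 1"
  unfolding Legendre_def QuadRes_def cong_def
  by (auto intro: exI[of _ 1])

lemma L_zero_iff: "Legendre a p = 0 \<longleftrightarrow> p dvd a"
  unfolding Legendre_def by (auto simp: cong_0_iff)

lemma euler_int:
  assumes "prime p" "p > 2"
  shows "[Legendre a p = a ^ nat ((p - 1) div 2)] (mod p)"
proof -
  define q where "q = nat p"
  have q: "prime q" "q > 2" "p = int q" using assms by (auto simp: q_def)
  have "nat ((p - 1) div 2) = (q - 1) div 2" using q(2,3) by (simp add: nat_div_distrib nat_diff_distrib')
  thus ?thesis using euler_criterion[OF q(1,2), of a] q(3) by simp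
qed

lemma L_mult:
  assumes "prime p" "p > 2"
  shows "Legendre (a*b) p = Legendre a p * Legendre b p"
proof -
  let ?k = "(p - 1) div 2"
  have 1: "[Legendre (a*b) p = (a*b)^nat ?k] (mod p)"
    using euler_int[OF assms] by simp
  have "[Legendre a p * Legendre b p = a^nat ?k * b^nat ?k] (mod p)"
    by (intro cong_mult euler_int[OF assms])
  hence "[Legendre (a*b) p = Legendre a p * Legendre b p] (mod p)"
    using 1 by (metis cong_sym cong_trans power_mult_distrib)
  hence d: "p dvd Legendre (a*b) p - Legendre a p * Legendre b p"
    by (simp add: cong_iff_dvd_diff)
  have "Legendre (a*b) p - Legendre a p * Legendre b p \<in> {-2,-1,0,1,2}"
    using L_range[of "a*b" p] L_range[of a p] L_range[of b p] by auto
  moreover have "\<not> p dvd 2" "\<not> p dvd 1" "\<not> p dvd -1" "\<not> p dvd -2" using assms(2)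
    by (auto dest: zdvd_imp_le)
  ultimately show ?thesis using d by auto
qed

lemma nonres:
  assumes "prime p" "p > 2"
  shows "\<exists>n. Legendre n p = -1"
proof -
  define q where "q = nat p"
  have q: "prime q" "q > 2" "p = int q" using assms by (auto simp: q_def)
  have "\<exists>g. residue_primroot q g" using prime_primitive_root_exists[of q] q(1,2) by auto
  then obtain g where g: "residue_primroot q g" by blast
  have og: "ord q g = q - 1" and cg: "coprime q g"
    using g q by (auto simp: residue_primroot_def totient_prime)
  have "\<not> [g ^ ((q - 1) div 2) = 1] (mod q)"
    by (rule ord_minimal) (use og q in auto)
  hence ne: "\<not> [int g ^ nat ((p - 1) div 2) = 1] (mod p)"
  proof -
    have k: "nat ((p - 1) div 2) = (q - 1) div 2" using q(2,3) by (simp add: nat_div_distrib nat_diff_distrib')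
    have iff: "[int (g ^ ((q-1) div 2)) = int 1] (mod int q) \<longleftrightarrow> [g ^ ((q-1) div 2) = 1] (mod q)"
      by (rule cong_int_iff)
    thus ?thesis using iff k q(3) \<open>\<not> [g ^ ((q - 1) div 2) = 1] (mod q)\<close> by simp
  qed
  have eu: "[Legendre (int g) p = int g ^ nat ((p - 1) div 2)] (mod p)"
    using euler_int[OF assms] by simp
  have "Legendre (int g) p \<noteq> 0"
  proof
    assume "Legendre (int g) p = 0"
    hence "q dvd g" using L_zero_iff q(3) by (metis int_dvd_int_iff)
    with cg q show False using coprime_absorb_left not_prime_unit by blast
  qed
  moreover have "Legendre (int g) p \<noteq> 1" using eu ne by (metis cong_sym)
  ultimately show ?thesis using L_range[of "int g" p] by blast
qed

lemma reindex:
  fixes p a b :: int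
  assumes "p > 1" "coprime a p"
  shows "(\<Sum>x\<in>{0..p-1}. f ((a*x+b) mod p)) = (\<Sum>x\<in>{0..p-1}. f x)"
proof -
  define h where "h = (\<lambda>x. (a*x+b) mod p)"
  have inj: "inj_on h {0..p-1}"
  proof (rule inj_onI)
    fix x y assume xy: "x \<in> {0..p-1}" "y \<in> {0..p-1}" "h x = h y"
    hence "[a*x+b = a*y+b] (mod p)" by (simp add: h_def cong_def)
    hence "[a*x = a*y] (mod p)" by (metis cong_add_rcancel)
    hence "[x = y] (mod p)" using assms(2) by (metis cong_mult_lcancel)
    thus "x = y" using xy(1,2) by (simp add: cong_def)
  qed
  have sub: "h ` {0..p-1} \<subseteq> {0..p-1}" using assms(1) by (auto simp: h_def)
  have im: "h ` {0..p-1} = {0..p-1}" by (rule endo_inj_surj[OF _ sub inj]) simp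
  have "(\<Sum>x\<in>{0..p-1}. f x) = (\<Sum>x\<in>h ` {0..p-1}. f x)" by (simp add: im)
  also have "\<dots> = (\<Sum>x\<in>{0..p-1}. f (h x))" by (rule sum.reindex_cong[OF inj refl]) simp
  finally show ?thesis by (simp add: h_def)
qed

lemma L_sum0:
  assumes "prime p" "p > 2"
  shows "(\<Sum>x\<in>{0..p-1}. Legendre x p) = 0"
proof -
  obtain n where n: "Legendre n p = -1" using nonres[OF assms] by blast
  have "\<not> p dvd n" using n L_zero_iff[of n p] by auto
  hence cp: "coprime n p" using assms(1) by (metis coprime_commute prime_imp_coprime)
  have "(\<Sum>x\<in>{0..p-1}. Legendre x p) = (\<Sum>x\<in>{0..p-1}. Legendre ((n*x+0) mod p) p)"
    using reindex[of p n "\<lambda>x. Legendre x p" 0] cp assms(2) by simp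
  also have "\<dots> = (\<Sum>x\<in>{0..p-1}. - Legendre x p)"
    by (rule sum.cong) (simp_all add: L_mod L_mult[OF assms] n)
  finally show ?thesis by (simp add: sum_negf)
qed

lemma small_dvd: "(p::int) dvd k \<Longrightarrow> \<bar>k\<bar> < p \<Longrightarrow> k = 0"
  using dvd_imp_le_int by force

lemma L_sq_mult:
  assumes "prime p" "p > 2" "\<not> p dvd t"
  shows "Legendre (t^2 * z) p = Legendre z p"
proof -
  have "Legendre t p \<in> {-1,1}" using L_range[of t p] L_zero_iff[of t p] assms(3) by auto
  thus ?thesis by (auto simp: power2_eq_square L_mult[OF assms(1,2)])
qed

lemma F0:
  assumes "prime p" "p > 2"
  shows "(\<Sum>x\<in>{0..p-1}. Legendre (x^3 - 0^2 * x + 0^2) p) = 0"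
proof -
  have "Legendre (x^3) p = Legendre x p" for x
  proof -
    have "Legendre (x^3) p = Legendre x p * (Legendre x p * Legendre x p)"
      by (simp add: power3_eq_cube L_mult[OF assms] mult.assoc)
    thus ?thesis using L_range[of x p] by auto
  qed
  thus ?thesis using L_sum0[OF assms] by simp
qed

lemma Ft:
  assumes "prime p" "p > 2" "t \<in> {1..p-1}"
  shows "(\<Sum>x\<in>{0..p-1}. Legendre (x^3 - t^2 * x + t^2) p) = (\<Sum>y\<in>{0..p-1}. Legendre (t*(y^3-y)+1) p)"
proof -
  have nd: "\<not> p dvd t" using assms(3) zdvd_imp_le by fastforce
  hence cp: "coprime t p" using assms(1) by (metis coprime_commute prime_imp_coprime)
  have "(\<Sum>x\<in>{0..p-1}. Legendre (x^3 - t^2 * x + t^2) p) = (\<Sum>y\<in>{0..p-1}. Legendre (((t*y+0) mod p)^3 - t^2 * ((t*y+0) mod p) + t^2) p)"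
    using reindex[of p t "\<lambda>x. Legendre (x^3 - t^2 * x + t^2) p" 0] cp assms(2) by simp
  also have "\<dots> = (\<Sum>y\<in>{0..p-1}. Legendre (t*(y^3-y)+1) p)"
  proof (rule sum.cong[OF refl])
    fix y
    have c: "[(t*y+0) mod p = t*y] (mod p)" by (simp add: cong_def)
    have "[((t*y+0) mod p)^3 - t^2 * ((t*y+0) mod p) + t^2 = (t*y)^3 - t^2 * (t*y) + t^2] (mod p)"
      by (intro cong_add cong_diff cong_mult cong_pow c cong_refl)
    hence "Legendre (((t*y+0) mod p)^3 - t^2 * ((t*y+0) mod p) + t^2) p = Legendre ((t*y)^3 - t^2 * (t*y) + t^2) p"
      by (rule L_cong)
    also have "(t*y)^3 - t^2 * (t*y) + t^2 = t^2 * (t*(y^3-y)+1)" by (simp add: algebra_simps power2_eq_square power3_eq_cube)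
    also have "Legendre (t^2 * (t*(y^3-y)+1)) p = Legendre (t*(y^3-y)+1) p" by (rule L_sq_mult[OF assms(1,2) nd])
    finally show "Legendre (((t*y+0) mod p)^3 - t^2 * ((t*y+0) mod p) + t^2) p = Legendre (t*(y^3-y)+1) p" .
  qed
  finally show ?thesis .
qed

lemma G:
  assumes "prime p" "p > 2"
  shows "(\<Sum>t\<in>{1..p-1}. Legendre (t*w+1) p) = (if p dvd w then p-1 else -1)"
proof (cases "p dvd w")
  case True
  have "Legendre (t*w+1) p = 1" for t
  proof -
    have "[t*w+1 = 1] (mod p)" using True by (simp add: cong_iff_dvd_diff)
    thus ?thesis using L_cong L_one assms(2) by (metis one_less_numeral_iff semiring_norm(76) less_trans)
  qed
  thus ?thesis using True assms(2) by simp
next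
  case False
  hence cp: "coprime w p" using assms(1) by (metis coprime_commute prime_imp_coprime)
  have "(\<Sum>t\<in>{0..p-1}. Legendre (t*w+1) p) = (\<Sum>t\<in>{0..p-1}. Legendre ((w*t+1) mod p) p)"
    by (simp add: L_mod mult.commute)
  also have "\<dots> = 0" using reindex[of p w "\<lambda>x. Legendre x p" 1] cp assms(2) L_sum0[OF assms] by simp
  finally have z: "(\<Sum>t\<in>{0..p-1}. Legendre (t*w+1) p) = 0" .
  have "{0..p-1} = insert 0 {1..p-1}" using assms(2) by auto
  hence "(\<Sum>t\<in>{0..p-1}. Legendre (t*w+1) p) = Legendre 1 p + (\<Sum>t\<in>{1..p-1}. Legendre (t*w+1) p)"
    by simp
  thus ?thesis using z False L_one[of p] assms(2) by simp
qed

lemma roots3: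
  fixes p :: int
  assumes "prime p" "p > 2"
  shows "{y\<in>{0..p-1}. p dvd y^3-y} = {0,1,p-1}"
proof
  show "{0,1,p-1} \<subseteq> {y\<in>{0..p-1}. p dvd y^3-y}"
  proof -
    have "(p-1)^3-(p-1) = p * ((p-1)*(p-2))" by (simp add: algebra_simps power3_eq_cube)
    hence "p dvd (p-1)^3-(p-1)" by simp
    thus ?thesis using assms(2) by auto
  qed
next
  show "{y\<in>{0..p-1}. p dvd y^3-y} \<subseteq> {0,1,p-1}"
  proof
    fix y assume y: "y \<in> {y\<in>{0..p-1}. p dvd y^3-y}"
    have "y^3-y = (y-1)*y*(y+1)" by (simp add: algebra_simps power3_eq_cube)
    hence "p dvd y-1 \<or> p dvd y \<or> p dvd y+1" using y assms(1) by (simp add: prime_dvd_mult_iff)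
    moreover have "p dvd y+1 \<Longrightarrow> y = p-1"
    proof -
      assume "p dvd y+1"
      hence "p dvd y+1-p" by (simp add: dvd_diff)
      hence "y+1-p = 0" using y assms(2) by (intro small_dvd) auto
      thus ?thesis by simp
    qed
    ultimately show "y \<in> {0,1,p-1}" using y assms(2) small_dvd[of p "y-1"] small_dvd[of p y] by auto
  qed
qed

theorem mainTheorem6:
  fixes p :: int
  assumes "prime p" and "p > 2"
  shows "(\<Sum>t\<in>{0..p-1}. a_coeff p t) = - 2 * p"
proof -
  let ?F = "\<lambda>t. (\<Sum>x\<in>{0..p-1}. Legendre (x^3 - t^2 * x + t^2) p)"
  have "{0..p-1} = insert 0 {1..p-1}" using assms(2) by auto
  hence "(\<Sum>t\<in>{0..p-1}. ?F t) = ?F 0 + (\<Sum>t\<in>{1..p-1}. ?F t)" by simp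
  also have "?F 0 = 0" using F0[OF assms] by simp
  also have "(\<Sum>t\<in>{1..p-1}. ?F t) = (\<Sum>t\<in>{1..p-1}. \<Sum>y\<in>{0..p-1}. Legendre (t*(y^3-y)+1) p)"
    by (rule sum.cong[OF refl]) (rule Ft[OF assms])
  also have "\<dots> = (\<Sum>y\<in>{0..p-1}. \<Sum>t\<in>{1..p-1}. Legendre (t*(y^3-y)+1) p)"
    by (rule sum.swap)
  also have "\<dots> = (\<Sum>y\<in>{0..p-1}. (if p dvd y^3-y then p else 0) - 1)"
    by (rule sum.cong[OF refl]) (simp add: G[OF assms])
  also have "\<dots> = (\<Sum>y\<in>{0..p-1}. (if p dvd y^3-y then p else 0)) - p"
    using assms(2) by (simp add: sum_subtractf)
  also have "(\<Sum>y\<in>{0..p-1}. (if p dvd y^3-y then p else 0)) = (\<Sum>y\<in>{y\<in>{0..p-1}. p dvd y^3-y}. p)"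
    by (rule sum.inter_filter[symmetric]) simp
  also have "\<dots> = 3 * p" using roots3[OF assms] assms(2) by simp
  finally have "(\<Sum>t\<in>{0..p-1}. ?F t) = 2 * p" by simp
  thus ?thesis unfolding a_coeff_def by (simp add: sum_negf)
qed

end
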